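(* Let $(A,\mathrm{d}_A),(B,\mathrm{d}_B),Y,Z,h_A,h_B$ be homotopy data with bimodule structure, and let $(B,m^{\mathrm{ht}}_n)$ be the homotopy transfer $A_\infty$-algebra on $B$. Suppose that $h_A$ satisfies the left-side condition $h_A\circ Z=0$. Then $m^{\mathrm{ht}}_n=0$ for all $n>2$, i.e. $(B,\mathrm{d}_B,m_2^{\mathrm{ht}})$ is a differential graded associative algebra.
   Context: All vector spaces are $\mathbb{Z}$-graded over a field $\Bbbk$ of characteristic zero. Homotopy data with bimodule structure consists of: cochain complexes $(A,\mathrm{d}_A)$, $(B,\mathrm{d}_B)$; degree-$0$ cochain maps $Y\colon A\to B$, $Z\colon B\to A$; degree $-1$ maps $h_A\colon A\to A$, $h_B\colon B\to B$ with $\mathbb{1}_A-Z\circ Y=\mathrm{d}_A h_A+h_A\mathrm{d}_A$ and $\mathbb{1}_B-Y\circ Z=\mathrm{d}_B h_B+h_B\mathrm{d}_B$; such that (1) $(A,\wedge,\mathrm{d}_A)$ is a differential graded associative algebra; (2) $\mathrm{Im}(Z)$ is a subring of $A$ and $B$ is a differential graded bimodule over $\mathrm{Im}(Z)$, with left action $Z(b)\rhd b'$ and right action $b\lhd Z(b')$ satisfying $Z(b)\rhd(Z(b')\rhd b'')=(Z(b)\wedge Z(b'))\rhd b''$, $(b\lhd Z(b'))\lhd Z(b'')=b\lhd(Z(b')\wedge Z(b''))$, and the graded Leibniz rules $\mathrm{d}_B(Z(b)\rhd b')=Z(\mathrm{d}_Bb)\rhd b'+(-1)^{|b|}Z(b)\rhd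 \mathrm{d}_Bb'$, $\mathrm{d}_B(b\lhd Z(b'))=\mathrm{d}_Bb\lhd Z(b')+(-1)^{|b|}b\lhd Z(\mathrm{d}_Bb')$; (3) $Y,Z$ are $\mathrm{Im}(Z)$-bimodule homomorphisms: $Y(Z(b)\wedge a)=Z(b)\rhd Y(a)$, $Y(a\wedge Z(b))=Y(a)\lhd Z(b)$, $Z(Z(b)\rhd b')=Z(b)\wedge Z(b')$, $Z(b\lhd Z(b'))=Z(b)\wedge Z(b')$ for all $a\in A$, $b,b'\in B$. An $A_\infty$-algebra is $(B,\{m_n\}_{n\ge1})$ with $m_n\colon B^{\otimes n}\to B$ of degree $2-n$ satisfying $\sum_{r+s+t=n}(-1)^{r+st}m_{r+t+1}(\mathbb{1}^{\otimes r}\otimes m_s\otimes\mathbb{1}^{\otimes t})=0$ for all $n\ge1$. The homotopy transfer $A_\infty$-algebra $(B,m_n^{\mathrm{ht}})$ is the one given by the homotopy transfer theorem (Kadeishvili) from the dga $A$ via $Y,Z,h_A$: $m_1^{\mathrm{ht}}=\mathrm{d}_B$, $m_2^{\mathrm{ht}}=Y\circ\wedge\circ(Z\otimes Z)$, $m_3^{\mathrm{ht}}(b\otimes b'\otimes b'')=Y\big(Z(b)\wedge h_A(Z(b')\wedge Z(b''))-h_A(Z(b)\wedge Z(b'))\wedge Z(b'')\big)$, and in general $m_n^{\mathrm{ht}}$ is a signed sum over planar binary rooted trees with $n$ leaves of the composite with $Z$ on the leaves, $\wedge$ at the vertices, $h_A$ on internal edges and $Y$ at the root. *)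

theory Defs
  imports Complex_Main
begin

text \<open>A Z-graded vector space is modelled by a carrier type 'a with a scalar
multiplication s over a field 'k, and a family G of subspaces (G n = degree-n part)
such that 'a is their (internal) direct sum.\<close>

definition sgnx :: "int \<Rightarrow> 'a::ab_group_add \<Rightarrow> 'a" where
  "sgnx p x = (if even p then x else - x)"

definition graded_space :: "('k::field \<Rightarrow> 'a::ab_group_add \<Rightarrow> 'a) \<Rightarrow> (int \<Rightarrow> 'a set) \<Rightarrow> bool" where
  "graded_space s G \<longleftrightarrow>
     vector_space s \<and>
     (\<forall>n. 0 \<in> G n \<and> (\<forall>x\<in>G n. \<forall>y\<in>G n. x + y \<in> G n) \<and> (\<forall>c. \<forall>x\<in>G n. s c x \<in> G n)) \<and>
     (\<forall>x. \<exists>I c. finite I \<and> (\<forall>n\<in>I. c n \<in> G n) \<and> x = (\<Sum>n\<in>I. c n)) \<and>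
     (\<forall>I c. finite I \<longrightarrow> (\<forall>n\<in>I. c n \<in> G n) \<longrightarrow> (\<Sum>n\<in>I. c n) = 0 \<longrightarrow> (\<forall>n\<in>I. c n = 0))"

definition graded_map ::
  "('k::field \<Rightarrow> 'a::ab_group_add \<Rightarrow> 'a) \<Rightarrow> (int \<Rightarrow> 'a set) \<Rightarrow>
   ('k \<Rightarrow> 'b::ab_group_add \<Rightarrow> 'b) \<Rightarrow> (int \<Rightarrow> 'b set) \<Rightarrow> int \<Rightarrow> ('a \<Rightarrow> 'b) \<Rightarrow> bool" where
  "graded_map sA GA sB GB d f \<longleftrightarrow>
     Vector_Spaces.linear sA sB f \<and> (\<forall>n x. x \<in> GA n \<longrightarrow> f x \<in> GB (n + d))"

definition cochain_complex :: "('k::field \<Rightarrow> 'a::ab_group_add \<Rightarrow> 'a) \<Rightarrow> (int \<Rightarrow> 'a set) \<Rightarrow> ('a \<Rightarrow> 'a) \<Rightarrow> bool" where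
  "cochain_complex s G d \<longleftrightarrow> graded_space s G \<and> graded_map s G s G 1 d \<and> (\<forall>x. d (d x) = 0)"

definition dga :: "('k::field \<Rightarrow> 'a::ab_group_add \<Rightarrow> 'a) \<Rightarrow> (int \<Rightarrow> 'a set) \<Rightarrow> ('a \<Rightarrow> 'a \<Rightarrow> 'a) \<Rightarrow> ('a \<Rightarrow> 'a) \<Rightarrow> bool" where
  "dga s G mult d \<longleftrightarrow>
     cochain_complex s G d \<and>
     (\<forall>x. Vector_Spaces.linear s s (mult x)) \<and>
     (\<forall>y. Vector_Spaces.linear s s (\<lambda>x. mult x y)) \<and>
     (\<forall>p q x y. x \<in> G p \<longrightarrow> y \<in> G q \<longrightarrow> mult x y \<in> G (p + q)) \<and>
     (\<forall>x y z. mult (mult x y) z = mult x (mult y z)) \<and>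
     (\<forall>p x y. x \<in> G p \<longrightarrow> d (mult x y) = mult (d x) y + sgnx p (mult x (d y)))"

definition homotopy_data_bimod ::
  "('k::field \<Rightarrow> 'a::ab_group_add \<Rightarrow> 'a) \<Rightarrow> (int \<Rightarrow> 'a set) \<Rightarrow> ('a \<Rightarrow> 'a) \<Rightarrow>
   ('k \<Rightarrow> 'b::ab_group_add \<Rightarrow> 'b) \<Rightarrow> (int \<Rightarrow> 'b set) \<Rightarrow> ('b \<Rightarrow> 'b) \<Rightarrow>
   ('a \<Rightarrow> 'b) \<Rightarrow> ('b \<Rightarrow> 'a) \<Rightarrow> ('a \<Rightarrow> 'a) \<Rightarrow> ('b \<Rightarrow> 'b) \<Rightarrow>
   ('a \<Rightarrow> 'a \<Rightarrow> 'a) \<Rightarrow> ('a \<Rightarrow> 'b \<Rightarrow> 'b) \<Rightarrow> ('b \<Rightarrow> 'a \<Rightarrow> 'b) \<Rightarrow> bool" where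
  "homotopy_data_bimod sA GA dA sB GB dB Y Z hA hB mult lact ract \<longleftrightarrow>
     \<comment> \<open>cochain complexes and homotopy data\<close>
     cochain_complex sA GA dA \<and> cochain_complex sB GB dB \<and>
     graded_map sA GA sB GB 0 Y \<and> graded_map sB GB sA GA 0 Z \<and>
     (\<forall>a. Y (dA a) = dB (Y a)) \<and> (\<forall>b. Z (dB b) = dA (Z b)) \<and>
     graded_map sA GA sA GA (-1) hA \<and> graded_map sB GB sB GB (-1) hB \<and>
     (\<forall>a. a - Z (Y a) = dA (hA a) + hA (dA a)) \<and>
     (\<forall>b. b - Y (Z b) = dB (hB b) + hB (dB b)) \<and>
     \<comment> \<open>(1) A is a dga\<close>
     dga sA GA mult dA \<and>
     \<comment> \<open>(2) Im Z is a subring, B is a dg bimodule over Im Z\<close>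
     (\<forall>b b'. \<exists>c. mult (Z b) (Z b') = Z c) \<and>
     (\<forall>b. Vector_Spaces.linear sB sB (lact (Z b))) \<and>
     (\<forall>b'. Vector_Spaces.linear sB sB (\<lambda>b. lact (Z b) b')) \<and>
     (\<forall>b. Vector_Spaces.linear sB sB (\<lambda>b'. ract b' (Z b))) \<and>
     (\<forall>b'. Vector_Spaces.linear sB sB (\<lambda>b. ract b' (Z b))) \<and>
     (\<forall>p q b b'. b \<in> GB p \<longrightarrow> b' \<in> GB q \<longrightarrow>
        lact (Z b) b' \<in> GB (p + q) \<and> ract b (Z b') \<in> GB (p + q)) \<and>
     (\<forall>b b' b''. lact (Z b) (lact (Z b') b'') = lact (mult (Z b) (Z b')) b'') \<and>
     (\<forall>b b' b''. ract (ract b (Z b')) (Z b'') = ract b (mult (Z b') (Z b''))) \<and>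
     (\<forall>b b' b''. ract (lact (Z b) b') (Z b'') = lact (Z b) (ract b' (Z b''))) \<and>
     (\<forall>p b b'. b \<in> GB p \<longrightarrow>
        dB (lact (Z b) b') = lact (Z (dB b)) b' + sgnx p (lact (Z b) (dB b'))) \<and>
     (\<forall>p b b'. b \<in> GB p \<longrightarrow>
        dB (ract b (Z b')) = ract (dB b) (Z b') + sgnx p (ract b (Z (dB b')))) \<and>
     \<comment> \<open>(3) Y and Z are Im Z-bimodule homomorphisms\<close>
     (\<forall>a b. Y (mult (Z b) a) = lact (Z b) (Y a)) \<and>
     (\<forall>a b. Y (mult a (Z b)) = ract (Y a) (Z b)) \<and>
     (\<forall>b b'. Z (lact (Z b) b') = mult (Z b) (Z b')) \<and>
     (\<forall>b b'. Z (ract b (Z b')) = mult (Z b) (Z b'))"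

datatype ptree = Leaf | Node ptree ptree

fun leaves :: "ptree \<Rightarrow> nat" where
  "leaves Leaf = 1"
| "leaves (Node l r) = leaves l + leaves r"

text \<open>Value in A of a planar binary rooted tree on inputs bs (read left to right):
Z on leaves, mult at vertices, hA on internal edges (no operator at the root).\<close>
fun tval :: "('b \<Rightarrow> 'a) \<Rightarrow> ('a \<Rightarrow> 'a \<Rightarrow> 'a) \<Rightarrow> ('a \<Rightarrow> 'a) \<Rightarrow> ptree \<Rightarrow> 'b list \<Rightarrow> 'a" where
  "tval Z mult h Leaf bs = Z (hd bs)"
| "tval Z mult h (Node l r) bs =
     mult ((if l = Leaf then id else h) (tval Z mult h l (take (leaves l) bs)))
          ((if r = Leaf then id else h) (tval Z mult h r (drop (leaves l) bs)))"

text \<open>m^ht_n evaluated on b_1 (x) ... (x) b_n (given as a list of length n);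
the tree t on inputs bs carries the sign (-1)^(sigma t bs).\<close>
definition mht :: "('b::ab_group_add \<Rightarrow> 'b) \<Rightarrow> ('a::ab_group_add \<Rightarrow> 'b) \<Rightarrow> ('b \<Rightarrow> 'a) \<Rightarrow>
    ('a \<Rightarrow> 'a \<Rightarrow> 'a) \<Rightarrow> ('a \<Rightarrow> 'a) \<Rightarrow> (ptree \<Rightarrow> 'b list \<Rightarrow> int) \<Rightarrow> nat \<Rightarrow> 'b list \<Rightarrow> 'b" where
  "mht dB Y Z mult hA \<sigma> n bs =
     (if n = 1 then dB (hd bs)
      else Y (\<Sum>t\<in>{t. leaves t = n}. sgnx (\<sigma> t bs) (tval Z mult hA t bs)))"

end

theory Submission
  imports Defs
begin

lemma lin0: assumes "Vector_Spaces.linear s1 s2 f" shows "f 0 = 0"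
proof - interpret Vector_Spaces.linear s1 s2 f by fact show ?thesis by simp qed
lemma linadd: assumes "Vector_Spaces.linear s1 s2 f" shows "f (x + y) = f x + f y"
proof - interpret Vector_Spaces.linear s1 s2 f by fact show ?thesis by (rule add) qed
lemma linneg: assumes "Vector_Spaces.linear s1 s2 f" shows "f (- x) = - f x"
proof - interpret Vector_Spaces.linear s1 s2 f by fact show ?thesis by (rule neg) qed
lemma linsgn: assumes "Vector_Spaces.linear s1 s2 f" shows "f (sgnx p x) = sgnx p (f x)"
  using linneg[OF assms] by (simp add: sgnx_def)

lemma leaves_pos: "leaves t \<ge> 1" by (induction t) auto
lemma leaves1: "leaves t = 1 \<longleftrightarrow> t = Leaf"
proof (cases t)
  case (Node l r) then show ?thesis using leaves_pos[of l] leaves_pos[of r] by simp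
qed simp
lemma leaves2: "{t. leaves t = 2} = {Node Leaf Leaf}"
proof -
  have "leaves t = 2 \<longleftrightarrow> t = Node Leaf Leaf" for t
  proof (cases t)
    case (Node l r) then show ?thesis using leaves_pos[of l] leaves_pos[of r] leaves1[of l] leaves1[of r] by auto
  qed simp
  then show ?thesis by auto
qed



theorem proposition2p4:
  fixes sA :: "'k::field_char_0 \<Rightarrow> 'a::ab_group_add \<Rightarrow> 'a"
    and sB :: "'k \<Rightarrow> 'b::ab_group_add \<Rightarrow> 'b"
    and GA :: "int \<Rightarrow> 'a set" and GB :: "int \<Rightarrow> 'b set"
    and dA hA :: "'a \<Rightarrow> 'a" and dB hB :: "'b \<Rightarrow> 'b"
    and Y :: "'a \<Rightarrow> 'b" and Z :: "'b \<Rightarrow> 'a"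
    and mult :: "'a \<Rightarrow> 'a \<Rightarrow> 'a" and lact :: "'a \<Rightarrow> 'b \<Rightarrow> 'b" and ract :: "'b \<Rightarrow> 'a \<Rightarrow> 'b"
    and \<sigma> :: "ptree \<Rightarrow> 'b list \<Rightarrow> int"
  assumes H: "homotopy_data_bimod sA GA dA sB GB dB Y Z hA hB mult lact ract"
    and sign2: "\<And>bs. even (\<sigma> (Node Leaf Leaf) bs)"
    and sign3a: "\<And>bs. even (\<sigma> (Node Leaf (Node Leaf Leaf)) bs)"
    and sign3b: "\<And>bs. odd (\<sigma> (Node (Node Leaf Leaf) Leaf) bs)"
    and left: "\<And>b. hA (Z b) = 0"
  shows "(\<forall>n bs. n > 2 \<longrightarrow> length bs = n \<longrightarrow> mht dB Y Z mult hA \<sigma> n bs = 0)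
     \<and> (\<forall>b b' b''. mht dB Y Z mult hA \<sigma> 2 [mht dB Y Z mult hA \<sigma> 2 [b, b'], b''] =
                    mht dB Y Z mult hA \<sigma> 2 [b, mht dB Y Z mult hA \<sigma> 2 [b', b'']])
     \<and> (\<forall>p b b'. b \<in> GB p \<longrightarrow>
          dB (mht dB Y Z mult hA \<sigma> 2 [b, b']) =
            mht dB Y Z mult hA \<sigma> 2 [dB b, b'] + sgnx p (mht dB Y Z mult hA \<sigma> 2 [b, dB b']))"
  
proof -
  note Hd = H[unfolded homotopy_data_bimod_def]
  have linY: "Vector_Spaces.linear sA sB Y" and linZ: "Vector_Spaces.linear sB sA Z"
    using Hd by (auto simp: graded_map_def)
  have dga: "dga sA GA mult dA" using Hd by blast
  have ml1: "\<And>x. mult x 0 = 0" using dga lin0 unfolding dga_def by metis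
  have ml2: "\<And>y. mult 0 y = 0"
  proof -
    fix y have "Vector_Spaces.linear sA sA (\<lambda>x. mult x y)" using dga unfolding dga_def by blast
    from lin0[OF this] show "mult 0 y = 0" by simp
  qed
  have Z0: "Z 0 = 0" using lin0[OF linZ] .
  have Y0: "Y 0 = 0" using lin0[OF linY] .
  have clos: "\<And>b b'. \<exists>c. mult (Z b) (Z b') = Z c" using conjunct1[OF Hd[THEN conjunct2, THEN conjunct2, THEN conjunct2, THEN conjunct2, THEN conjunct2, THEN conjunct2, THEN conjunct2, THEN conjunct2, THEN conjunct2, THEN conjunct2, THEN conjunct2]] by blast
  have inZ: "\<And>bs. \<exists>c. tval Z mult hA t bs = Z c" for t
  proof (induction t)
    case Leaf then show ?case by auto
  next
    case (Node l r)
    show ?case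
    proof -
      fix bs
      obtain c1 where c1: "tval Z mult hA l (take (leaves l) bs) = Z c1" using Node(1) by blast
      obtain c2 where c2: "tval Z mult hA r (drop (leaves l) bs) = Z c2" using Node(2) by blast
      have e1: "\<exists>d. (if l = Leaf then id else hA) (Z c1) = Z d" using left Z0 by (metis id_apply)
      have e2: "\<exists>d. (if r = Leaf then id else hA) (Z c2) = Z d" using left Z0 by (metis id_apply)
      from e1 e2 clos show "\<exists>c. tval Z mult hA (Node l r) bs = Z c" by (auto simp: c1 c2)
    qed
  qed
  have zero: "tval Z mult hA t bs = 0" if "leaves t > 2" for t bs
  proof (cases t)
    case Leaf then show ?thesis using that by simp
  next
    case (Node l r)
    have "l \<noteq> Leaf \<or> r \<noteq> Leaf" using that Node by auto
    then show ?thesis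
    proof
      assume "l \<noteq> Leaf"
      obtain c where "tval Z mult hA l (take (leaves l) bs) = Z c" using inZ by blast
      then show ?thesis using Node \<open>l \<noteq> Leaf\<close> left ml2 by simp
    next
      assume "r \<noteq> Leaf"
      obtain c where "tval Z mult hA r (drop (leaves l) bs) = Z c" using inZ by blast
      then show ?thesis using Node \<open>r \<noteq> Leaf\<close> left ml1 by simp
    qed
  qed
  have P1: "\<forall>n bs. n > 2 \<longrightarrow> length bs = n \<longrightarrow> mht dB Y Z mult hA \<sigma> n bs = 0"
  proof (intro allI impI)
    fix n bs assume n: "n > (2::nat)"
    have "(\<Sum>t\<in>{t. leaves t = n}. sgnx (\<sigma> t bs) (tval Z mult hA t bs)) = 0"
      by (rule sum.neutral) (use zero n in \<open>auto simp: sgnx_def\<close>)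
    then show "mht dB Y Z mult hA \<sigma> n bs = 0" using n Y0 by (simp add: mht_def)
  qed
  have m2: "\<And>b b'. mht dB Y Z mult hA \<sigma> 2 [b, b'] = Y (mult (Z b) (Z b'))"
    using sign2 by (simp add: mht_def leaves2 sgnx_def)
  have dAZ: "\<And>b. dA (Z b) = Z (dB b)" using Hd by metis
  have ZYZ: "\<And>b. Z (Y (Z b)) = Z b"
  proof -
    fix b
    have hh: "\<forall>a. a - Z (Y a) = dA (hA a) + hA (dA a)" using H unfolding homotopy_data_bimod_def by (elim conjE) assumption
    have "Z b - Z (Y (Z b)) = dA (hA (Z b)) + hA (dA (Z b))" using hh by blast
    also have "\<dots> = dA 0" using left dAZ by simp
    also have "\<dots> = 0" using dga unfolding dga_def cochain_complex_def graded_map_def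
      using lin0 by blast
    finally show "Z (Y (Z b)) = Z b" by simp
  qed
  have ZYm: "\<And>b b'. Z (Y (mult (Z b) (Z b'))) = mult (Z b) (Z b')"
    using clos ZYZ by metis
  have assoc: "\<And>x y z. mult (mult x y) z = mult x (mult y z)" using dga unfolding dga_def by blast
  have P2: "\<forall>b b' b''. mht dB Y Z mult hA \<sigma> 2 [mht dB Y Z mult hA \<sigma> 2 [b, b'], b''] =
                    mht dB Y Z mult hA \<sigma> 2 [b, mht dB Y Z mult hA \<sigma> 2 [b', b'']]"
    by (simp add: m2 ZYm assoc)
  have P3: "\<forall>p b b'. b \<in> GB p \<longrightarrow>
          dB (mht dB Y Z mult hA \<sigma> 2 [b, b']) =
            mht dB Y Z mult hA \<sigma> 2 [dB b, b'] + sgnx p (mht dB Y Z mult hA \<sigma> 2 [b, dB b'])"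
  proof (intro allI impI)
    fix p b b' assume b: "b \<in> GB p"
    have Zb: "Z b \<in> GA p" using Hd b unfolding graded_map_def by (metis add.right_neutral)
    have leib: "dA (mult (Z b) (Z b')) = mult (dA (Z b)) (Z b') + sgnx p (mult (Z b) (dA (Z b')))"
      using dga Zb unfolding dga_def by blast
    have YdA': "\<forall>a. Y (dA a) = dB (Y a)" using H unfolding homotopy_data_bimod_def by (elim conjE) assumption
    have YdA: "\<And>a. Y (dA a) = dB (Y a)" using YdA' by blast
    show "dB (mht dB Y Z mult hA \<sigma> 2 [b, b']) =
            mht dB Y Z mult hA \<sigma> 2 [dB b, b'] + sgnx p (mht dB Y Z mult hA \<sigma> 2 [b, dB b'])"
      using YdA[of "mult (Z b) (Z b')"]
      by (simp add: m2 leib linadd[OF linY] linsgn[OF linY] dAZ)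
  qed
  show ?thesis using P1 P2 P3 by blast
qed

end
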